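(* Let $E_1,\dots,E_{N_B}$ be pairwise distinct real numbers satisfying the non-degeneracy condition at order $p$, let $d_1,\dots,d_{N_B}>0$, and let $\chi(t)=\sum_{j=1}^{N_B}d_je^{-itE_j}$ and $I_k=\overline{|\chi(t)|^{2k}}$. Then for every $k=1,\dots,p$, $$I_k=(k!)^2\sum_{\substack{k_1,\dots,k_{N_B}\ge0\\ k_1+\dots+k_{N_B}=k}}\ \prod_{i=1}^{N_B}\left(\frac{d_i^{k_i}}{k_i!}\right)^2 .$$ Moreover, defining coefficients $a_n$ by the power series $\ln\big(I_0(2\sqrt z)\big)=\sum_{n=1}^\infty a_n\frac{z^n}{n!}$ (where $I_0$ is the modified Bessel function of the first kind) and $X_n:=\sum_{j=1}^{N_B}d_j^{2n}$, one has $$I_p=\sum_{q=1}^{p-1}\binom{p-1}{q-1}\frac{p!}{(p-q)!}\,a_qX_qI_{p-q}+p!\,a_pX_p .$$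
   Context: $\overline{f(t)}:=\lim_{T\to\infty}\frac1T\int_0^Tf(t)\,dt$. Pairwise distinct numbers $E_1,\dots,E_{N_B}$ satisfy the non-degeneracy condition at order $M$ ($M$-ND) if for any sequences $\alpha_i,\beta_i\in\{1,\dots,N_B\}$, $i=1,\dots,M$, the equality $\sum_{j=1}^ME_{\alpha_j}=\sum_{j=1}^ME_{\beta_j}$ implies $\alpha_i=\beta_{\pi(i)}$ for some permutation $\pi\in\mathbb S_M$. $M$-ND implies $N$-ND for $1\le N\le M$. *)

theory Defs
  imports "HOL-Analysis.Analysis" "HOL-Combinatorics.Permutations"
begin

definition time_avg :: "(real \<Rightarrow> real) \<Rightarrow> real" where
  "time_avg f = Lim at_top (\<lambda>T. (1 / T) * integral {0..T} f)"

definition nondeg :: "nat \<Rightarrow> (nat \<Rightarrow> real) \<Rightarrow> nat \<Rightarrow> bool" where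
  "nondeg N E M \<longleftrightarrow>
     (\<forall>\<alpha> \<beta>. (\<forall>i<M. \<alpha> i < N \<and> \<beta> i < N) \<longrightarrow>
        (\<Sum>j<M. E (\<alpha> j)) = (\<Sum>j<M. E (\<beta> j)) \<longrightarrow>
        (\<exists>\<pi>. \<pi> permutes {..<M} \<and> (\<forall>i<M. \<alpha> i = \<beta> (\<pi> i))))"

definition bessel_I0 :: "real \<Rightarrow> real" where
  "bessel_I0 x = (\<Sum>m. (x / 2) ^ (2 * m) / (fact m)^2)"

definition chi :: "nat \<Rightarrow> (nat \<Rightarrow> real) \<Rightarrow> (nat \<Rightarrow> real) \<Rightarrow> real \<Rightarrow> complex" where
  "chi N d E t = (\<Sum>j<N. complex_of_real (d j) * exp (- \<i> * complex_of_real (t * E j)))"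

end

theory Submission
  imports Defs "HOL-Combinatorics.Multiset_Permutations"
begin

definition Lk :: "nat \<Rightarrow> nat \<Rightarrow> nat list set" where
  "Lk N k = {xs. set xs \<subseteq> {..<N} \<and> length xs = k}"

lemma finite_Lk[simp]: "finite (Lk N k)"
  unfolding Lk_def by (rule finite_lists_length_eq) simp

lemma power_sum_lists:
  fixes f :: "nat \<Rightarrow> 'a::comm_ring_1"
  shows "(\<Sum>j<N. f j) ^ k = (\<Sum>xs\<in>Lk N k. prod_list (map f xs))"
proof (induction k)
  case 0
  have "Lk N 0 = {[]}" by (auto simp: Lk_def)
  then show ?case by simp
next
  case (Suc k)
  have "(\<Sum>j<N. f j) ^ Suc k = (\<Sum>xs\<in>Lk N k. prod_list (map f xs)) * (\<Sum>j<N. f j)"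
    using Suc by (simp add: mult.commute)
  also have "\<dots> = (\<Sum>(xs,j)\<in>Lk N k \<times> {..<N}. prod_list (map f (j#xs)))"
    unfolding sum_product sum.cartesian_product by (simp add: mult.commute)
  also have "\<dots> = (\<Sum>xs\<in>Lk N (Suc k). prod_list (map f xs))"
    unfolding Lk_def lists_length_Suc_eq
    by (subst sum.reindex) (auto simp: inj_on_def case_prod_unfold)
  finally show ?case .
qed

definition wt :: "(nat \<Rightarrow> real) \<Rightarrow> nat list \<Rightarrow> real" where
  "wt d xs = prod_list (map d xs)"
definition Es :: "(nat \<Rightarrow> real) \<Rightarrow> nat list \<Rightarrow> real" where
  "Es E xs = sum_list (map E xs)"

lemma prod_list_cis:
  "prod_list (map (\<lambda>j. complex_of_real (d j) * cis (- (t * E j))) xs) =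
   complex_of_real (wt d xs) * cis (- (t * Es E xs))"
  by (induction xs) (auto simp: wt_def Es_def cis_mult algebra_simps)

lemma chi_cis: "chi N d E t = (\<Sum>j<N. complex_of_real (d j) * cis (- (t * E j)))"
  unfolding chi_def by (simp add: cis_conv_exp)

lemma chi_pow: "chi N d E t ^ k =
   (\<Sum>xs\<in>Lk N k. complex_of_real (wt d xs) * cis (- (t * Es E xs)))"
  unfolding chi_cis power_sum_lists prod_list_cis ..

lemma norm_pow_Re: "cmod z ^ (2*k) = Re (z^k * cnj (z^k))"
proof -
  have "cmod z ^ (2*k) = (cmod (z^k))^2" by (simp add: norm_power power_mult power_mult_distrib mult.commute)
  also have "\<dots> = Re (complex_of_real ((cmod (z^k))^2))" by simp
  also have "\<dots> = Re (z^k * cnj (z^k))" by (simp only: complex_norm_square)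
  finally show ?thesis .
qed

lemma chi_norm_expand:
  "cmod (chi N d E t) ^ (2*k) =
    (\<Sum>a\<in>Lk N k. \<Sum>b\<in>Lk N k. wt d a * wt d b * cos (t * (Es E b - Es E a)))"
proof -
  have "cmod (chi N d E t) ^ (2*k) = Re (chi N d E t ^ k * cnj (chi N d E t ^ k))"
    by (rule norm_pow_Re)
  also have "\<dots> = Re (\<Sum>a\<in>Lk N k. \<Sum>b\<in>Lk N k.
      complex_of_real (wt d a) * cis (- (t * Es E a)) * cnj (complex_of_real (wt d b) * cis (- (t * Es E b))))"
    unfolding chi_pow cnj_sum sum_product ..
  also have "\<dots> = (\<Sum>a\<in>Lk N k. \<Sum>b\<in>Lk N k. wt d a * wt d b * cos (t * (Es E b - Es E a)))"
    unfolding Re_sum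
  proof (intro sum.cong refl)
    fix a b
    have "complex_of_real (wt d a) * cis (- (t * Es E a)) * cnj (complex_of_real (wt d b) * cis (- (t * Es E b)))
      = complex_of_real (wt d a * wt d b) * cis (t * (Es E b - Es E a))" (is "?l = ?r")
      by (simp add: cis_cnj cis_mult algebra_simps)
    then show "Re (complex_of_real (wt d a) * cis (- (t * Es E a)) * cnj (complex_of_real (wt d b) * cis (- (t * Es E b))))
       = wt d a * wt d b * cos (t * (Es E b - Es E a))" by (simp only: \<open>?l = ?r\<close>) simp
  qed
  finally show ?thesis .
qed

lemma integral_cos_nz:
  fixes w T :: real
  assumes "w \<noteq> 0" "0 \<le> T"
  shows "integral {0..T} (\<lambda>t. cos (t * w)) = sin (T * w) / w"
proof -
  have deriv: "((\<lambda>t. sin (t * w) / w) has_vector_derivative cos (x * w)) (at x within {0..T})" for x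
  proof -
    have "((\<lambda>t. sin (t * w) / w) has_real_derivative cos (x * w)) (at x within {0..T})"
      using assms by (auto intro!: derivative_eq_intros)
    then show ?thesis by (simp add: has_real_derivative_iff_has_vector_derivative)
  qed
  have "((\<lambda>x. cos (x * w)) has_integral (sin (T * w) / w - sin (0 * w) / w)) {0..T}"
    by (rule fundamental_theorem_of_calculus[OF _ deriv]) (use assms in auto)
  then show ?thesis by (simp add: integral_unique)
qed

lemma avg_cos_single:
  fixes w :: real
  shows   "((\<lambda>T. 1 / T * integral {0..T} (\<lambda>t. cos (t * w))) \<longlongrightarrow> (if w = 0 then 1 else 0)) at_top"
proof (cases "w = 0")
  case True
  have "\<forall>T\<ge>1. 1 = 1 / T * integral {0..T} (\<lambda>t. cos (t * w))"
  proof (intro allI impI)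
    fix T :: real assume "1 \<le> T"
    then have "integral {0..T} (\<lambda>t. 1::real) = T"
      using integral_const_real[of 0 T "1::real"] content_real[of 0 T] by simp
    then show "1 = 1 / T * integral {0..T} (\<lambda>t. cos (t * w))" using True \<open>1 \<le> T\<close> by simp
  qed
  then have "eventually (\<lambda>T. 1 = 1 / T * integral {0..T} (\<lambda>t. cos (t * w))) at_top"
    unfolding eventually_at_top_linorder by blast
  then show ?thesis using True by (intro Lim_transform_eventually[OF tendsto_const]) auto
next
  case False
  have ev: "eventually (\<lambda>T. sin (T * w) / w / T = 1 / T * integral {0..T} (\<lambda>t. cos (t * w))) at_top"
    using eventually_gt_at_top[of "0::real"] by eventually_elim (simp add: integral_cos_nz False)
  have "((\<lambda>T. sin (T * w) / w / T) \<longlongrightarrow> 0) at_top"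
  proof (rule Lim_null_comparison)
    show "eventually (\<lambda>T. norm (sin (T * w) / w / T) \<le> 1 / \<bar>w\<bar> * inverse T) at_top"
      using eventually_gt_at_top[of "0::real"]
    proof eventually_elim
      case (elim T)
      have "norm (sin (T * w) / w / T) = \<bar>sin (T * w)\<bar> / \<bar>w\<bar> / T" using elim by (simp add: abs_divide abs_mult)
      also have "\<dots> \<le> 1 / \<bar>w\<bar> / T" using elim False
        by (intro divide_right_mono) (auto simp: abs_sin_le_one)
      finally show ?case by (simp add: divide_inverse)
    qed
    show "((\<lambda>T. 1 / \<bar>w\<bar> * inverse T) \<longlongrightarrow> 0) at_top"
      by (intro tendsto_mult_right_zero tendsto_inverse_0_at_top filterlim_ident)
  qed
  then show ?thesis using False Lim_transform_eventually[OF _ ev] by simp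
qed

lemma avg_cos_sum:
  fixes A :: "'i set" and c w :: "'i \<Rightarrow> real"
  assumes "finite A"
  shows "((\<lambda>T. 1 / T * integral {0..T} (\<lambda>t. \<Sum>i\<in>A. c i * cos (t * w i)))
          \<longlongrightarrow> (\<Sum>i\<in>A. if w i = 0 then c i else 0)) at_top"
proof -
  have eq: "1 / T * integral {0..T} (\<lambda>t. \<Sum>i\<in>A. c i * cos (t * w i)) =
        (\<Sum>i\<in>A. c i * (1 / T * integral {0..T} (\<lambda>t. cos (t * w i))))" for T
  proof -
    have int: "(\<lambda>t. c i * cos (t * w i)) integrable_on {0..T}" for i
      by (intro integrable_continuous_real continuous_intros)
    have "integral {0..T} (\<lambda>t. \<Sum>i\<in>A. c i * cos (t * w i)) =
          (\<Sum>i\<in>A. integral {0..T} (\<lambda>t. c i * cos (t * w i)))"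
      by (rule integral_sum) (use assms int in auto)
    also have "\<dots> = (\<Sum>i\<in>A. c i * integral {0..T} (\<lambda>t. cos (t * w i)))"
      by (simp add: integral_mult_right)
    finally show ?thesis by (simp add: sum_distrib_left algebra_simps)
  qed
  have "((\<lambda>T. \<Sum>i\<in>A. c i * (1 / T * integral {0..T} (\<lambda>t. cos (t * w i))))
          \<longlongrightarrow> (\<Sum>i\<in>A. c i * (if w i = 0 then 1 else 0))) at_top"
    by (intro tendsto_sum tendsto_mult tendsto_const avg_cos_single)
  then show ?thesis unfolding eq by (simp add: if_distrib cong: if_cong)
qed

lemma Es_mset: "mset a = mset b \<Longrightarrow> Es E a = Es E b"
proof -
  assume h: "mset a = mset b"
  have "Es E a = sum_mset (image_mset E (mset a))"
    by (simp add: Es_def sum_mset_sum_list[symmetric])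
  also have "\<dots> = Es E b" by (simp add: h Es_def sum_mset_sum_list[symmetric])
  finally show ?thesis .
qed

lemma wt_mset: "mset a = mset b \<Longrightarrow> wt d a = wt d b"
proof -
  assume h: "mset a = mset b"
  have "wt d a = prod_mset (image_mset d (mset a))"
    by (simp add: wt_def prod_mset_prod_list[symmetric])
  also have "\<dots> = wt d b" by (simp add: h wt_def prod_mset_prod_list[symmetric])
  finally show ?thesis .
qed

lemma Es_sum_nth: "Es E xs = (\<Sum>j<length xs. E (xs ! j))"
  unfolding Es_def sum_list_sum_nth by (simp add: atLeast0LessThan)

lemma nd_mset:
  assumes ND: "nondeg N E p" and kp: "k \<le> p" and a: "a \<in> Lk N k" and b: "b \<in> Lk N k"
    and eq: "Es E a = Es E b"
  shows "mset a = mset b"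
proof (cases "N = 0")
  case True
  then show ?thesis using a b by (auto simp: Lk_def)
next
  case False
  define a' where "a' = a @ replicate (p - k) 0"
  define b' where "b' = b @ replicate (p - k) 0"
  have la: "length a' = p" "length b' = p" using a b kp by (auto simp: a'_def b'_def Lk_def)
  have sa: "set a' \<subseteq> {..<N}" "set b' \<subseteq> {..<N}" using a b False by (auto simp: a'_def b'_def Lk_def)
  have "Es E a' = Es E b'" using eq by (simp add: a'_def b'_def Es_def)
  then have "(\<Sum>j<p. E (a' ! j)) = (\<Sum>j<p. E (b' ! j))" using la by (simp add: Es_sum_nth)
  moreover have "\<forall>i<p. a' ! i < N \<and> b' ! i < N" using sa la by (metis lessThan_iff nth_mem subsetD)
  ultimately obtain \<pi> where pi: "\<pi> permutes {..<p}" "\<forall>i<p. a' ! i = b' ! (\<pi> i)"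
    using ND unfolding nondeg_def by blast
  have "a' = permute_list \<pi> b'"
    by (rule nth_equalityI) (use la pi in \<open>auto simp: permute_list_nth\<close>)
  then have "mset a' = mset b'" using pi la by simp
  then show ?thesis by (simp add: a'_def b'_def)
qed

lemma size_count_sum:
  fixes M :: "nat multiset"
  shows "set_mset M \<subseteq> {..<N} \<Longrightarrow> size M = (\<Sum>i<N. count M i)"
proof (induction M)
  case empty
  then show ?case by simp
next
  case (add x M)
  then have x: "x < N" and M: "set_mset M \<subseteq> {..<N}" by auto
  have "(\<Sum>i<N. count (add_mset x M) i) = (\<Sum>i<N. count M i + (if i = x then 1 else 0))"
    by (intro sum.cong) auto
  also have "\<dots> = (\<Sum>i<N. count M i) + 1" using x by (simp add: sum.distrib sum.delta)
  finally show ?case using add.IH[OF M] by simp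
qed

lemma prod_mset_count:
  fixes M :: "nat multiset" and d :: "nat \<Rightarrow> 'a::comm_monoid_mult"
  shows "set_mset M \<subseteq> {..<N} \<Longrightarrow> prod_mset (image_mset d M) = (\<Prod>i<N. d i ^ count M i)"
proof (induction M)
  case empty
  then show ?case by simp
next
  case (add x M)
  then have x: "x < N" and M: "set_mset M \<subseteq> {..<N}" by auto
  have "(\<Prod>i<N. d i ^ count (add_mset x M) i) = (\<Prod>i<N. d i ^ count M i * (if i = x then d i else 1))"
    by (intro prod.cong) (auto simp del: power_Suc simp add: power_Suc2)
  also have "\<dots> = (\<Prod>i<N. d i ^ count M i) * d x" using x by (simp add: prod.distrib)
  finally show ?case using add.IH[OF M] by (metis image_mset_add_mset prod_mset.add_mset mult.commute)
qed

lemma wt_count: "set xs \<subseteq> {..<N} \<Longrightarrow> wt d xs = (\<Prod>i<N. d i ^ count (mset xs) i)"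
  unfolding wt_def prod_mset_prod_list[symmetric] mset_map by (rule prod_mset_count) simp

lemma card_perm_real:
  fixes M :: "nat multiset"
  assumes "set_mset M \<subseteq> {..<N}"
  shows "real (card (permutations_of_multiset M)) = fact (size M) / (\<Prod>i<N. fact (count M i))"
proof -
  have "(\<Prod>x\<in>set_mset M. fact (count M x) :: nat) = (\<Prod>i<N. fact (count M i))"
    by (rule prod.mono_neutral_left) (use assms in \<open>auto simp: not_in_iff\<close>)
  then have "card (permutations_of_multiset M) * (\<Prod>i<N. fact (count M i)) = fact (size M)"
    using card_permutations_of_multiset_aux[of M] by simp
  then have "real (card (permutations_of_multiset M)) * (\<Prod>i<N. fact (count M i)) = fact (size M)"
    by (metis (mono_tags, lifting) of_nat_fact of_nat_mult of_nat_prod prod.cong)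
  moreover have "(\<Prod>i<N. fact (count M i) :: real) \<noteq> 0" by simp
  ultimately show ?thesis by (simp add: field_simps)
qed

definition Sk :: "nat \<Rightarrow> (nat \<Rightarrow> real) \<Rightarrow> nat \<Rightarrow> real" where
  "Sk N d k = (\<Sum>\<mu>\<in>multisets_of_size {..<N} k. \<Prod>i<N. (d i ^ count \<mu> i / fact (count \<mu> i))^2)"

lemma Lk_perm:
  assumes "\<mu> \<in> multisets_of_size {..<N} k"
  shows "{a\<in>Lk N k. mset a = \<mu>} = permutations_of_multiset \<mu>"
  using assms unfolding Lk_def multisets_of_size_def permutations_of_multiset_def
  by (auto simp flip: set_mset_mset size_mset)

lemma mset_Lk: "a \<in> Lk N k \<Longrightarrow> mset a \<in> multisets_of_size {..<N} k"
  unfolding Lk_def multisets_of_size_def by auto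

lemma comb:
  "(\<Sum>a\<in>Lk N k. \<Sum>b\<in>Lk N k. if mset a = mset b then wt d a * wt d b else 0) = (fact k)^2 * Sk N d k"
proof -
  define M where "M = multisets_of_size {..<N} k"
  define wm where "wm \<mu> = (\<Prod>i<N. d i ^ count \<mu> i)" for \<mu> :: "nat multiset"
  define g where "g \<mu> = real (card (permutations_of_multiset \<mu>)) * wm \<mu> ^ 2" for \<mu>
  have wt: "wt d a = wm (mset a)" if "a \<in> Lk N k" for a
    using that by (simp add: wt_count Lk_def wm_def)
  have "(\<Sum>a\<in>Lk N k. \<Sum>b\<in>Lk N k. if mset a = mset b then wt d a * wt d b else 0)
      = (\<Sum>a\<in>Lk N k. g (mset a))"
  proof (intro sum.cong refl)
    fix a assume a: "a \<in> Lk N k"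
    have "(\<Sum>b\<in>Lk N k. if mset a = mset b then wt d a * wt d b else 0)
        = (\<Sum>b\<in>{b\<in>Lk N k. mset b = mset a}. wt d a * wt d b)"
      by (subst sum.inter_filter) (auto intro!: sum.cong)
    also have "\<dots> = (\<Sum>b\<in>permutations_of_multiset (mset a). wm (mset a) * wm (mset a))"
    proof (intro sum.cong)
      show "{b\<in>Lk N k. mset b = mset a} = permutations_of_multiset (mset a)"
        using Lk_perm[OF mset_Lk[OF a]] .
      fix b assume "b \<in> permutations_of_multiset (mset a)"
      then have "b \<in> Lk N k" "mset b = mset a" using Lk_perm[OF mset_Lk[OF a]] by blast+
      then show "wt d a * wt d b = wm (mset a) * wm (mset a)" using wt a by simp
    qed
    also have "\<dots> = g (mset a)" by (simp add: g_def power2_eq_square)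
    finally show "(\<Sum>b\<in>Lk N k. if mset a = mset b then wt d a * wt d b else 0) = g (mset a)" .
  qed
  also have "\<dots> = (\<Sum>\<mu>\<in>M. \<Sum>a\<in>{a\<in>Lk N k. mset a = \<mu>}. g (mset a))"
    by (rule sum.group[symmetric]) (auto simp: M_def mset_Lk)
  also have "\<dots> = (\<Sum>\<mu>\<in>M. real (card (permutations_of_multiset \<mu>)) * g \<mu>)"
  proof (intro sum.cong refl)
    fix \<mu> assume mu: "\<mu> \<in> M"
    have eq: "{a\<in>Lk N k. mset a = \<mu>} = permutations_of_multiset \<mu>"
      using Lk_perm[of \<mu>] mu by (simp add: M_def)
    have "(\<Sum>a\<in>permutations_of_multiset \<mu>. g (mset a)) = (\<Sum>a\<in>permutations_of_multiset \<mu>. g \<mu>)"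
      by (rule sum.cong) (auto simp: permutations_of_multiset_def)
    then show "(\<Sum>a\<in>{a\<in>Lk N k. mset a = \<mu>}. g (mset a)) = real (card (permutations_of_multiset \<mu>)) * g \<mu>"
      unfolding eq by simp
  qed
  also have "\<dots> = (\<Sum>\<mu>\<in>M. (fact k)^2 * (\<Prod>i<N. (d i ^ count \<mu> i / fact (count \<mu> i))^2))"
  proof (intro sum.cong refl)
    fix \<mu> assume mu: "\<mu> \<in> M"
    then have s: "set_mset \<mu> \<subseteq> {..<N}" "size \<mu> = k" by (auto simp: M_def multisets_of_size_def)
    have "real (card (permutations_of_multiset \<mu>)) * g \<mu> = (real (card (permutations_of_multiset \<mu>)) * wm \<mu>)^2"
      by (simp add: g_def power2_eq_square)
    also have "\<dots> = (fact k * (\<Prod>i<N. d i ^ count \<mu> i / fact (count \<mu> i)))^2"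
      using s by (simp add: card_perm_real wm_def prod_dividef)
    also have "\<dots> = (fact k)^2 * (\<Prod>i<N. (d i ^ count \<mu> i / fact (count \<mu> i))^2)"
      by (simp add: power_mult_distrib prod_power_distrib)
    finally show "real (card (permutations_of_multiset \<mu>)) * g \<mu> = (fact k)^2 * (\<Prod>i<N. (d i ^ count \<mu> i / fact (count \<mu> i))^2)" .
  qed
  also have "\<dots> = (fact k)^2 * Sk N d k" by (simp add: Sk_def M_def sum_distrib_left)
  finally show ?thesis .
qed

lemma bij_count:
  fixes N k :: nat
  shows "bij_betw count (multisets_of_size {..<N} k) {ks. (\<forall>i\<ge>N. ks i = 0) \<and> (\<Sum>i<N. ks i) = k}"
proof (rule bij_betwI')
  fix x y :: "nat multiset"
  show "(count x = count y) = (x = y)" by (metis multiset_eqI)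
next
  fix x :: "nat multiset" assume "x \<in> multisets_of_size {..<N} k"
  then have s: "set_mset x \<subseteq> {..<N}" "size x = k" by (auto simp: multisets_of_size_def)
  then show "count x \<in> {ks. (\<forall>i\<ge>N. ks i = 0) \<and> (\<Sum>i<N. ks i) = k}"
  proof (intro CollectI conjI allI impI)
    fix i assume "N \<le> i"
    then have "i \<notin># x" using s(1) by auto
    then show "count x i = 0" by (simp add: not_in_iff)
  next
    show "(\<Sum>i<N. count x i) = k" using size_count_sum[OF s(1)] s(2) by simp
  qed
next
  fix ks assume ks: "ks \<in> {ks. (\<forall>i\<ge>N. ks i = 0) \<and> (\<Sum>i<N. ks i) = k}"
  have fin: "finite {x. 0 < ks x}"
    by (rule finite_subset[of _ "{..<N}"]) (use ks in \<open>auto simp: not_less[symmetric]\<close>)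
  define x where "x = Abs_multiset ks"
  have cx: "count x = ks" using fin by (simp add: x_def)
  have sx: "set_mset x \<subseteq> {..<N}"
  proof
    fix i assume "i \<in># x"
    then have "count x i \<noteq> 0" by simp
    then show "i \<in> {..<N}" using ks cx by (metis (mono_tags, lifting) CollectD lessThan_iff not_le)
  qed
  have "size x = k" using size_count_sum[OF sx] cx ks by simp
  then have "x \<in> multisets_of_size {..<N} k" using sx by (simp add: multisets_of_size_def)
  then show "\<exists>x\<in>multisets_of_size {..<N} k. ks = count x" using cx by auto
qed

lemma Sk_ks:
  "Sk N d k = (\<Sum>ks\<in>{ks. (\<forall>i\<ge>N. ks i = 0) \<and> (\<Sum>i<N. ks i) = k}. \<Prod>i<N. (d i ^ ks i / fact (ks i))^2)"
  unfolding Sk_def by (rule sum.reindex_bij_betw[OF bij_count])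

lemma part1:
  assumes ND: "nondeg N E p" and kp: "k \<le> p"
  shows "((\<lambda>T. 1 / T * integral {0..T} (\<lambda>t. cmod (chi N d E t) ^ (2 * k)))
           \<longlongrightarrow> (fact k)^2 * Sk N d k) at_top"
proof -
  define A where "A = Lk N k \<times> Lk N k"
  define c where "c = (\<lambda>(a,b). wt d a * wt d b)"
  define w where "w = (\<lambda>(a,b). Es E b - Es E a)"
  have fun_eq: "(\<lambda>t. cmod (chi N d E t) ^ (2 * k)) = (\<lambda>t. \<Sum>i\<in>A. c i * cos (t * w i))"
    unfolding chi_norm_expand A_def sum.cartesian_product c_def w_def
    by (simp add: case_prod_unfold)
  have lim: "(\<Sum>i\<in>A. if w i = 0 then c i else 0) =
     (\<Sum>a\<in>Lk N k. \<Sum>b\<in>Lk N k. if mset a = mset b then wt d a * wt d b else 0)"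
    unfolding A_def sum.cartesian_product c_def w_def
    by (intro sum.cong refl) (auto dest: nd_mset[OF ND kp], (metis Es_mset)+)
  have "finite A" by (simp add: A_def)
  from avg_cos_sum[OF this, of c w] show ?thesis
    unfolding fun_eq lim comb .
qed

subsection \<open>Formal power series part\<close>

lemma fps_zero_from_eval:
  fixes f :: "real fps"
  assumes e: "0 < e" and rad: "ereal e \<le> fps_conv_radius f"
    and z: "\<And>z. 0 < z \<Longrightarrow> z < e \<Longrightarrow> eval_fps f z = 0"
  shows "f = 0"
proof (rule ccontr)
  assume f: "f \<noteq> 0"
  define n where "n = subdegree f"
  define g where "g = fps_shift n f"
  have g0: "eval_fps g 0 \<noteq> 0" using f by (simp add: g_def n_def eval_fps_at_0)
  have radg: "ereal e \<le> fps_conv_radius g" using rad by (simp add: g_def)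
  have "norm (0::real) < fps_conv_radius g" using radg e
    by (metis ereal_less(2) norm_zero order_less_le_trans zero_ereal_def)
  then have "isCont (eval_fps g) 0" using continuous_eval_fps by blast
  then have lim: "(eval_fps g \<longlongrightarrow> eval_fps g 0) (at_right 0)"
    by (simp add: isCont_def filterlim_at_split)
  have "eventually (\<lambda>z. eval_fps g z = 0) (at_right (0::real))"
  proof -
    have "eventually (\<lambda>z. z \<in> {0<..<e}) (at_right (0::real))"
      using e by (intro eventually_at_right_real) auto
    then show ?thesis
    proof eventually_elim
      case (elim z)
      then have "norm z < fps_conv_radius f" using rad
        by (metis abs_of_pos greaterThanLessThan_iff ereal_less_eq(3) less_ereal.simps(1) order_less_le_trans real_norm_def)
      then show ?case using elim z[of z]
        by (simp add: g_def eval_fps_shift n_def)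
    qed
  qed
  then have "(eval_fps g \<longlongrightarrow> 0) (at_right 0)"
    by (rule tendsto_eventually)
  with lim have "eval_fps g 0 = 0"
    using tendsto_unique[OF trivial_limit_at_right_real] by blast
  with g0 show False by simp
qed

definition fscale :: "real \<Rightarrow> real fps \<Rightarrow> real fps" where
  "fscale c F = Abs_fps (\<lambda>n. c ^ n * fps_nth F n)"

lemma fscale_nth[simp]: "fps_nth (fscale c F) n = c ^ n * fps_nth F n"
  by (simp add: fscale_def)

lemma fscale_mult: "fscale c (F * H) = fscale c F * fscale c H"
proof (rule fps_ext)
  fix n
  have "fps_nth (fscale c (F * H)) n = (\<Sum>i=0..n. c ^ i * fps_nth F i * (c ^ (n - i) * fps_nth H (n - i)))"
    by (simp add: fps_mult_nth sum_distrib_left)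
       (intro sum.cong refl, simp add: power_add[symmetric] algebra_simps)
  also have "\<dots> = fps_nth (fscale c F * fscale c H) n" by (simp add: fps_mult_nth)
  finally show "fps_nth (fscale c (F * H)) n = fps_nth (fscale c F * fscale c H) n" .
qed

lemma fscale_deriv: "fps_deriv (fscale c F) = fps_const c * fscale c (fps_deriv F)"
  by (rule fps_ext) (simp add: algebra_simps)

lemma deriv_rel_fscale:
  assumes "fps_deriv G = G * fps_deriv C"
  shows "fps_deriv (fscale c G) = fscale c G * fps_deriv (fscale c C)"
proof -
  have "fps_deriv (fscale c G) = fps_const c * fscale c (G * fps_deriv C)"
    by (simp add: fscale_deriv assms)
  also have "\<dots> = fscale c G * fps_deriv (fscale c C)"
    by (simp add: fscale_mult fscale_deriv algebra_simps)
  finally show ?thesis .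
qed

lemma deriv_rel_prod:
  fixes G C :: "nat \<Rightarrow> real fps"
  assumes "finite I" "\<And>i. i \<in> I \<Longrightarrow> fps_deriv (G i) = G i * fps_deriv (C i)"
  shows "fps_deriv (\<Prod>i\<in>I. G i) = (\<Prod>i\<in>I. G i) * fps_deriv (\<Sum>i\<in>I. C i)"
  using assms
proof (induction I rule: finite_induct)
  case empty
  then show ?case by simp
next
  case (insert x I)
  have "fps_deriv (\<Prod>i\<in>insert x I. G i) = fps_deriv (G x * (\<Prod>i\<in>I. G i))"
    using insert by simp
  also have "\<dots> = G x * ((\<Prod>i\<in>I. G i) * fps_deriv (\<Sum>i\<in>I. C i)) + G x * fps_deriv (C x) * (\<Prod>i\<in>I. G i)"
    using insert by simp
  also have "\<dots> = (\<Prod>i\<in>insert x I. G i) * fps_deriv (\<Sum>i\<in>insert x I. C i)"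
    using insert by (simp add: algebra_simps)
  finally show ?case .
qed

definition Gs :: "real fps" where "Gs = Abs_fps (\<lambda>m. 1 / (fact m)^2)"
definition Cs :: "(nat \<Rightarrow> real) \<Rightarrow> real fps" where
  "Cs a = Abs_fps (\<lambda>n. if n = 0 then 0 else a n / fact n)"

lemma Gs_nth: "fps_nth Gs m = 1 / (fact m)^2" by (simp add: Gs_def)
lemma Cs_nth: "fps_nth (Cs a) n = (if n = 0 then 0 else a n / fact n)" by (simp add: Cs_def)

lemma Gs_radius: "fps_conv_radius Gs = \<infinity>"
proof -
  have "fps_conv_radius Gs \<ge> \<infinity>"
    unfolding fps_conv_radius_def
  proof (rule conv_radius_geI_ex')
    fix r :: real assume r: "0 < r"
    show "summable (\<lambda>n. fps_nth Gs n * of_real r ^ n)"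
    proof (rule summable_comparison_test[OF _ summable_exp[of r]])
      show "\<exists>N. \<forall>n\<ge>N. norm (fps_nth Gs n * of_real r ^ n) \<le> inverse (fact n) * r ^ n"
      proof (intro exI allI impI)
        fix n :: nat
        have f1: "(1::real) \<le> fact n" by simp
        have "norm (fps_nth Gs n * of_real r ^ n) = r ^ n / (fact n * fact n)"
          using r by (simp add: Gs_nth power2_eq_square abs_mult)
        also have "\<dots> \<le> r ^ n / fact n"
          using r f1 by (intro divide_left_mono) (auto intro: order_trans[OF _ mult_right_mono[of 1 "fact n" "fact n"]])
        finally show "norm (fps_nth Gs n * of_real r ^ n) \<le> inverse (fact n) * r ^ n"
          by (simp add: divide_inverse mult.commute)
      qed
    qed
  qed
  then show ?thesis by simp
qed

lemma eval_Gs: "0 \<le> z \<Longrightarrow> eval_fps Gs z = bessel_I0 (2 * sqrt z)"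
  unfolding eval_fps_def bessel_I0_def Gs_nth
  by (intro arg_cong[where f=suminf] ext) (simp add: power_mult)

lemma eval_Gs_pos: "0 \<le> z \<Longrightarrow> eval_fps Gs z \<ge> 1"
proof -
  assume z: "0 \<le> z"
  have "summable (\<lambda>n. fps_nth Gs n * z ^ n)" by (rule summable_fps) (simp add: Gs_radius)
  then have "(\<Sum>n\<in>{0}. fps_nth Gs n * z ^ n) \<le> (\<Sum>n. fps_nth Gs n * z ^ n)"
    by (rule sum_le_suminf) (use z in \<open>auto simp: Gs_nth\<close>)
  then show ?thesis by (simp add: eval_fps_def Gs_nth)
qed

lemma deriv_rel_Gs:
  fixes a :: "nat \<Rightarrow> real"
  assumes a_def: "\<exists>r>0. \<forall>z. 0 \<le> z \<and> z < r \<longrightarrow>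
        (\<lambda>n. a (Suc n) * z ^ Suc n / fact (Suc n)) sums ln (bessel_I0 (2 * sqrt z))"
  shows "fps_deriv Gs = Gs * fps_deriv (Cs a)"
proof -
  from a_def obtain r where r: "r > 0" and
    hr: "\<And>z. 0 \<le> z \<Longrightarrow> z < r \<Longrightarrow> (\<lambda>n. a (Suc n) * z ^ Suc n / fact (Suc n)) sums ln (bessel_I0 (2 * sqrt z))"
    by blast
  have sumsC: "(\<lambda>n. fps_nth (Cs a) n * z ^ n) sums ln (eval_fps Gs z)" if "0 \<le> z" "z < r" for z
  proof -
    have "(\<lambda>n. fps_nth (Cs a) (Suc n) * z ^ Suc n) sums ln (eval_fps Gs z)"
      using hr[OF that] that by (simp add: Cs_nth eval_Gs)
    then show ?thesis by (subst (asm) sums_Suc_iff) (simp add: Cs_nth)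
  qed
  have radC: "fps_conv_radius (Cs a) \<ge> ereal r"
    unfolding fps_conv_radius_def
  proof (rule conv_radius_geI_ex')
    fix \<rho> :: real assume "0 < \<rho>" "ereal \<rho> < ereal r"
    then show "summable (\<lambda>n. fps_nth (Cs a) n * of_real \<rho> ^ n)"
      using sumsC[of \<rho>] by (auto simp: sums_iff)
  qed
  have radG: "fps_conv_radius Gs \<ge> ereal r" by (simp add: Gs_radius)
  have radDC: "fps_conv_radius (fps_deriv (Cs a)) \<ge> ereal r"
    using radC fps_conv_radius_deriv[of "Cs a"] by (meson order_trans)
  have radDG: "fps_conv_radius (fps_deriv Gs) \<ge> ereal r"
    using radG fps_conv_radius_deriv[of "Gs"] by (meson order_trans)
  have radGDC: "fps_conv_radius (Gs * fps_deriv (Cs a)) \<ge> ereal r"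
    using fps_conv_radius_mult[of Gs "fps_deriv (Cs a)"] radG radDC by (simp add: min_def split: if_splits)
  have inr: "norm z < F" if "F \<ge> ereal r" "0 < z" "z < r" for z :: real and F :: ereal
  proof -
    have "ereal (norm z) < ereal r" using that by simp
    then show ?thesis using that(1) by (rule order_less_le_trans)
  qed
  define H where "H = fps_deriv Gs - Gs * fps_deriv (Cs a)"
  have radH: "fps_conv_radius H \<ge> ereal r"
    using fps_conv_radius_diff[of "fps_deriv Gs" "Gs * fps_deriv (Cs a)"] radDG radGDC
    by (simp add: H_def min_def split: if_splits)
  have "H = 0"
  proof (rule fps_zero_from_eval[OF r radH])
    fix z assume z: "0 < z" "z < r"
    have eqS: "exp (eval_fps (Cs a) x) = eval_fps Gs x" if "x \<in> {0<..<r}" for x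
    proof -
      have "eval_fps (Cs a) x = ln (eval_fps Gs x)"
        using sumsC[of x] that by (simp add: sums_iff eval_fps_def)
      moreover have "eval_fps Gs x > 0" using eval_Gs_pos[of x] that by simp
      ultimately show ?thesis by simp
    qed
    have d1: "((\<lambda>x. exp (eval_fps (Cs a) x)) has_field_derivative
              exp (eval_fps (Cs a) z) * eval_fps (fps_deriv (Cs a)) z) (at z)"
      using has_field_derivative_eval_fps[OF inr[OF radC z]]
      by (auto intro!: derivative_eq_intros)
    have d2: "(eval_fps Gs has_field_derivative
              exp (eval_fps (Cs a) z) * eval_fps (fps_deriv (Cs a)) z) (at z)"
      by (rule has_field_derivative_transform_within_open[OF d1, of "{0<..<r}"]) (use z eqS in auto)
    have d3: "(eval_fps Gs has_field_derivative eval_fps (fps_deriv Gs) z) (at z)"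
      by (rule has_field_derivative_eval_fps[OF inr[OF radG z]])
    have "eval_fps (fps_deriv Gs) z = eval_fps Gs z * eval_fps (fps_deriv (Cs a)) z"
      using DERIV_unique[OF d3 d2] eqS[of z] z by simp
    also have "\<dots> = eval_fps (Gs * fps_deriv (Cs a)) z"
      by (rule eval_fps_mult[symmetric]) (use inr[OF radG z] inr[OF radDC z] in auto)
    finally show "eval_fps H z = 0"
      unfolding H_def by (subst eval_fps_diff) (use inr[OF radDG z] inr[OF radGDC z] in auto)
  qed
  then show ?thesis by (simp add: H_def)
qed

lemma coef_id:
  assumes q1: "1 \<le> q" and qp: "q < p"
  shows "(fact p)^2 / real p * (real q / fact q) =
         real ((p - 1) choose (q - 1)) * fact p / fact (p - q) * (fact (p - q))^2"
proof -
  have c: "real ((p - 1) choose (q - 1)) = fact (p - 1) / (fact (q - 1) * fact (p - q))"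
    using q1 qp by (subst binomial_fact) (auto simp: algebra_simps)
  have fp: "(fact p :: real) = real p * fact (p - 1)" using qp by (simp add: fact_reduce)
  have fq: "(fact q :: real) = real q * fact (q - 1)" using q1 by (simp add: fact_reduce)
  have "real p \<noteq> 0" "real q \<noteq> 0" using q1 qp by auto
  then show ?thesis unfolding c fp fq by (simp add: field_simps power2_eq_square)
qed

lemma sum_rev_1p:
  fixes h :: "nat \<Rightarrow> real"
  assumes "1 \<le> p"
  shows "(\<Sum>i=0..p-1. h (p - i)) = (\<Sum>q=1..p. h q)"
  by (rule sum.reindex_bij_witness[of _ "\<lambda>q. p - q" "\<lambda>i. p - i"]) (use assms in auto)

definition Xs :: "nat \<Rightarrow> (nat \<Rightarrow> real) \<Rightarrow> nat \<Rightarrow> real" where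
  "Xs N d n = (\<Sum>j<N. d j ^ (2 * n))"

lemma recurrence:
  fixes a d :: "nat \<Rightarrow> real"
  assumes a_def: "\<exists>r>0. \<forall>z. 0 \<le> z \<and> z < r \<longrightarrow>
        (\<lambda>n. a (Suc n) * z ^ Suc n / fact (Suc n)) sums ln (bessel_I0 (2 * sqrt z))"
    and p: "1 \<le> p"
  shows "real p * Sk N d p = (\<Sum>q=1..p. Sk N d (p - q) * real q * (a q / fact q * Xs N d q))"
proof -
  define F where "F = (\<Prod>i<N. fscale (d i ^ 2) Gs)"
  define D where "D = (\<Sum>i<N. fscale (d i ^ 2) (Cs a))"
  have rel: "fps_deriv F = F * fps_deriv D"
    unfolding F_def D_def
    by (rule deriv_rel_prod) (auto intro: deriv_rel_fscale deriv_rel_Gs[OF a_def])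
  have Fn: "fps_nth F k = Sk N d k" for k
    unfolding F_def Sk_def
    by (subst fps_prod_nth') (auto intro!: sum.cong prod.cong simp: Gs_nth power_divide mult.commute[of 2] simp flip: power_mult)
  have Dn: "fps_nth D n = (if n = 0 then 0 else a n / fact n * Xs N d n)" for n
    unfolding D_def fps_sum_nth Xs_def by (simp add: Cs_nth sum_distrib_left algebra_simps mult.commute[of 2] flip: power_mult)
  have "real p * Sk N d p = fps_nth (fps_deriv F) (p - 1)"
    using p by (simp add: Fn)
  also have "\<dots> = fps_nth (F * fps_deriv D) (p - 1)" by (simp only: rel)
  also have "\<dots> = (\<Sum>i=0..p-1. Sk N d i * (real (p - i) * fps_nth D (p - i)))"
    unfolding fps_mult_nth using p by (intro sum.cong refl) (simp add: Fn Suc_diff_Suc)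
  also have "\<dots> = (\<Sum>i=0..p-1. (\<lambda>q. Sk N d (p - q) * real q * (a q / fact q * Xs N d q)) (p - i))"
    using p by (intro sum.cong refl) (auto simp: Dn)
  also have "\<dots> = (\<Sum>q=1..p. Sk N d (p - q) * real q * (a q / fact q * Xs N d q))"
    by (rule sum_rev_1p[OF p])
  finally show ?thesis .
qed

lemma final_alg:
  fixes S A X :: "nat \<Rightarrow> real"
  assumes rec: "real p * S p = (\<Sum>q=1..p. S (p - q) * real q * (A q / fact q * X q))"
    and p: "1 \<le> p" and S0: "S 0 = 1"
  shows "(fact p)^2 * S p = (\<Sum>q=1..p-1. real ((p - 1) choose (q - 1)) * fact p / fact (p - q) * A q * X q
            * ((fact (p - q))^2 * S (p - q))) + fact p * A p * X p"
proof -
  define g where "g q = S (p - q) * real q * (A q / fact q * X q)" for q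
  obtain p' where p': "p = Suc p'" using p by (cases p) auto
  have split: "(\<Sum>q=1..p. g q) = (\<Sum>q=1..p-1. g q) + g p"
    unfolding p' by (simp add: sum.cl_ivl_Suc)
  have pnz: "real p \<noteq> 0" using p by simp
  have "(fact p)^2 * S p = (fact p)^2 / real p * (real p * S p)" using pnz by simp
  also have "\<dots> = (\<Sum>q=1..p-1. (fact p)^2 / real p * g q) + (fact p)^2 / real p * g p"
    unfolding rec g_def[symmetric] split by (simp add: sum_distrib_left sum_divide_distrib algebra_simps)
  also have "(\<Sum>q=1..p-1. (fact p)^2 / real p * g q) =
     (\<Sum>q=1..p-1. real ((p - 1) choose (q - 1)) * fact p / fact (p - q) * A q * X q * ((fact (p - q))^2 * S (p - q)))"
  proof (intro sum.cong refl)
    fix q assume q: "q \<in> {1..p-1}"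
    then have q1: "1 \<le> q" and qp: "q < p" by auto
    have "(fact p)^2 / real p * g q = ((fact p)^2 / real p * (real q / fact q)) * S (p - q) * A q * X q"
      by (simp add: g_def algebra_simps)
    also have "\<dots> = real ((p - 1) choose (q - 1)) * fact p / fact (p - q) * (fact (p - q))^2 * S (p - q) * A q * X q"
      by (simp only: coef_id[OF q1 qp])
    finally show "(fact p)^2 / real p * g q = real ((p - 1) choose (q - 1)) * fact p / fact (p - q) * A q * X q * ((fact (p - q))^2 * S (p - q))"
      by (simp add: algebra_simps)
  qed
  also have "(fact p)^2 / real p * g p = fact p * A p * X p"
    using pnz by (simp add: g_def S0 power2_eq_square field_simps)
  finally show ?thesis .
qed

lemma Sk0: "Sk N d 0 = 1" by (simp add: Sk_def)

theorem theorem4: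
  fixes N p :: nat and E d a :: "nat \<Rightarrow> real"
  assumes p: "p \<ge> 1"
    and distinct: "inj_on E {..<N}"
    and ND: "nondeg N E p"
    and dpos: "\<And>j. j < N \<Longrightarrow> d j > 0"
    and a_def: "\<exists>r>0. \<forall>z. 0 \<le> z \<and> z < r \<longrightarrow>
        (\<lambda>n. a (Suc n) * z ^ Suc n / fact (Suc n)) sums ln (bessel_I0 (2 * sqrt z))"
  shows "(\<forall>k\<in>{1..p}.
           ((\<lambda>T. (1 / T) * integral {0..T} (\<lambda>t. cmod (chi N d E t) ^ (2 * k)))
              \<longlongrightarrow> (fact k)^2 * (\<Sum>ks\<in>{ks. (\<forall>i\<ge>N. ks i = 0) \<and> (\<Sum>i<N. ks i) = k}.
                                   \<Prod>i<N. (d i ^ ks i / fact (ks i))^2)) at_top)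
         \<and> time_avg (\<lambda>t. cmod (chi N d E t) ^ (2 * p)) =
           (\<Sum>q=1..p-1. real ((p - 1) choose (q - 1)) * fact p / fact (p - q) * a q
                          * (\<Sum>j<N. d j ^ (2 * q))
                          * time_avg (\<lambda>t. cmod (chi N d E t) ^ (2 * (p - q))))
           + fact p * a p * (\<Sum>j<N. d j ^ (2 * p))"
proof
  show "\<forall>k\<in>{1..p}.
           ((\<lambda>T. (1 / T) * integral {0..T} (\<lambda>t. cmod (chi N d E t) ^ (2 * k)))
              \<longlongrightarrow> (fact k)^2 * (\<Sum>ks\<in>{ks. (\<forall>i\<ge>N. ks i = 0) \<and> (\<Sum>i<N. ks i) = k}.
                                   \<Prod>i<N. (d i ^ ks i / fact (ks i))^2)) at_top"
    using part1[OF ND] by (auto simp: Sk_ks[symmetric])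
  have TA: "time_avg (\<lambda>t. cmod (chi N d E t) ^ (2 * j)) = (fact j)^2 * Sk N d j" if "j \<le> p" for j
    unfolding time_avg_def by (rule tendsto_Lim[OF trivial_limit_at_top_linorder part1[OF ND that]])
  have "time_avg (\<lambda>t. cmod (chi N d E t) ^ (2 * p)) = (fact p)^2 * Sk N d p" by (rule TA) simp
  also have "\<dots> = (\<Sum>q=1..p-1. real ((p - 1) choose (q - 1)) * fact p / fact (p - q) * a q * Xs N d q
            * ((fact (p - q))^2 * Sk N d (p - q))) + fact p * a p * Xs N d p"
    by (rule final_alg[OF recurrence[OF a_def p] p Sk0])
  also have "\<dots> = (\<Sum>q=1..p-1. real ((p - 1) choose (q - 1)) * fact p / fact (p - q) * a q
                          * (\<Sum>j<N. d j ^ (2 * q))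
                          * time_avg (\<lambda>t. cmod (chi N d E t) ^ (2 * (p - q))))
           + fact p * a p * (\<Sum>j<N. d j ^ (2 * p))"
    by (intro arg_cong2[where f="(+)"] sum.cong refl) (simp_all add: TA Xs_def)
  finally show "time_avg (\<lambda>t. cmod (chi N d E t) ^ (2 * p)) =
           (\<Sum>q=1..p-1. real ((p - 1) choose (q - 1)) * fact p / fact (p - q) * a q
                          * (\<Sum>j<N. d j ^ (2 * q))
                          * time_avg (\<lambda>t. cmod (chi N d E t) ^ (2 * (p - q))))
           + fact p * a p * (\<Sum>j<N. d j ^ (2 * p))" .
qed

end
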